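(* Let $N=p^l$ with $p$ an odd prime, $l\ge1$, and $N\equiv1\pmod 4$. Let $i\in\mathbb{F}_N$ be one of the two elements with $i^2=-1$, and fix $\nu\in\bar{Q}$. For $\Delta\in\{1,-1\}$ and $t\in\mathbb{F}_N$ let $C_{\Delta,t}$ be the conjugacy class in $\mathrm{ESL}(2,\mathbb{F}_N)$ of $\begin{pmatrix}0&-\Delta\\1&t\end{pmatrix}$; for $t\in\{\pm2,\pm2i\}$ let $\bar{C}_t$ be the conjugacy class of $\begin{pmatrix}0&-\frac{t^2}{4\nu}\\ \nu&t\end{pmatrix}$ and $D_t$ the conjugacy class of $\begin{pmatrix}t/2&0\\0&t/2\end{pmatrix}$. Then the conjugacy classes of $\mathrm{ESL}(2,\mathbb{F}_N)$ are exactly the $2N$ classes $C_{\Delta,t}$ ($\Delta=\pm1$, $t\in\mathbb{F}_N$) together with the $8$ classes $\bar{C}_{\pm2},\bar{C}_{\pm2i},D_{\pm2},D_{\pm2i}$, and these $2N+8$ classes are pairwise distinct. Moreover, for $F=\begin{pmatrix}\alpha&\beta\\\gamma&\delta\end{pmatrix}\in\mathrm{ESL}(2,\mathbb{F}_N)$ with $\Delta=\det F$, $t=\operatorname{tr}F$: (1) if $t^2-4\Delta\neq0$ then $F\in C_{\Delta,t}$; (2) if $t^2-4\Delta=0$ then $F\in C_{\Delta,t}$ if $\beta\in Q$ or $\gamma\in Q$; $F\in\bar{C}_t$ if $\beta\in\bar{Q}$ or $\gamma\in\bar{Q}$; and $F\in D_t$ if $\beta=\gamma=0$. (When $t^2-4\Delta=0$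 it cannot happen that one of $\beta,\gamma$ lies in $Q$ and the other in $\bar{Q}$.)
   Context: $\mathbb{F}_N$ is the finite field with $N$ elements and $\mathbb{F}_N^{*}$ its nonzero elements. $Q=\{x\in\mathbb{F}_N^{*}: x=y^2\text{ for some }y\in\mathbb{F}_N^{*}\}$ and $\bar{Q}=\mathbb{F}_N^{*}\setminus Q$. $\mathrm{ESL}(2,\mathbb{F}_N)$ is the group of $2\times2$ matrices over $\mathbb{F}_N$ with determinant $\pm1$; conjugacy is taken within this group. *)

theory Defs
  imports "HOL-Analysis.Analysis"
begin

text \<open>2x2 matrices over a field are represented as 'a^2^2 (rows, then columns);
  entry (r,c) is A$r$c with r,c :: 2.\<close>

definition mat2 :: "'a::zero \<Rightarrow> 'a \<Rightarrow> 'a \<Rightarrow> 'a \<Rightarrow> 'a^2^2" where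
  "mat2 a b c d = (\<chi> r s. if r = 1 then (if s = 1 then a else b) else (if s = 1 then c else d))"

definition ESL :: "(('a::field)^2^2) set" where
  "ESL = {A. det A = 1 \<or> det A = -1}"

definition conj_class :: "('a::field)^2^2 \<Rightarrow> ('a^2^2) set" where
  "conj_class A = {P ** A ** matrix_inv P | P. P \<in> ESL}"

definition QR :: "('a::field) set" where
  "QR = {x. x \<noteq> 0 \<and> (\<exists>y. y \<noteq> 0 \<and> x = y^2)}"

definition QN :: "('a::field) set" where
  "QN = (UNIV - {0}) - QR"

end

theory Submission
  imports Defs "HOL-Number_Theory.Residues"
begin

lemma mat2_nth[simp]:
  "mat2 a b c d $ 1 $ 1 = a" "mat2 a b c d $ 1 $ 2 = b"
  "mat2 a b c d $ 2 $ 1 = c" "mat2 a b c d $ 2 $ 2 = d"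
  by (simp_all add: mat2_def)

lemma mat2_eta: "(A::'a::zero^2^2) = mat2 (A$1$1) (A$1$2) (A$2$1) (A$2$2)"
  unfolding mat2_def vec_eq_iff forall_2 by simp

lemma mat2_eq_iff: "mat2 a b c d = mat2 a' b' c' d' \<longleftrightarrow> a = a' \<and> b = b' \<and> c = c' \<and> d = d'"
  by (metis mat2_nth)

lemma mat2_mult: "mat2 a b c d ** mat2 e f g h =
   mat2 (a*e+b*g) (a*f+b*h) (c*e+d*g) (c*f+(d::'a::semiring_1)*h)"
  unfolding vec_eq_iff forall_2 matrix_matrix_mult_def by (simp add: UNIV_2)

lemma mat2_one: "(mat 1 :: 'a::semiring_1^2^2) = mat2 1 0 0 1"
  unfolding vec_eq_iff forall_2 mat_def by simp

lemma det_mat2: "det (mat2 a b c (d::'a::comm_ring_1)) = a*d - b*c"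
  by (simp add: det_2)

lemma trace_mat2: "trace (mat2 a b c (d::'a::comm_ring_1)) = a + d"
  by (simp add: trace_def UNIV_2)

lemma matrix_inv_unique:
  fixes P B :: "'a::field^2^2"
  assumes "P ** B = mat 1" "B ** P = mat 1"
  shows "matrix_inv P = B"
proof -
  have "\<exists>A'. P ** A' = mat 1 \<and> A' ** P = mat 1" using assms by blast
  then have h: "P ** matrix_inv P = mat 1 \<and> matrix_inv P ** P = mat 1"
    unfolding matrix_inv_def by (rule someI_ex)
  have "matrix_inv P = matrix_inv P ** (P ** B)" using assms by simp
  also have "\<dots> = B" using h by (simp add: matrix_mul_assoc)
  finally show ?thesis .
qed

definition inv2 :: "'a::field^2^2 \<Rightarrow> 'a^2^2" where
  "inv2 P = mat2 (P$2$2 / det P) (- P$1$2 / det P) (- P$2$1 / det P) (P$1$1 / det P)"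

lemma inv2_aux:
  fixes a b c d D :: "'a::field"
  assumes "D \<noteq> 0" "a*d - b*c = D"
  shows "mat2 a b c d ** mat2 (d/D) (-b/D) (-c/D) (a/D) = mat2 1 0 0 1"
        "mat2 (d/D) (-b/D) (-c/D) (a/D) ** mat2 a b c d = mat2 1 0 0 1"
proof -
  have e: "a*d = D + b*c" "d*a = D + b*c" using assms(2) by (auto simp: algebra_simps)
  show "mat2 a b c d ** mat2 (d/D) (-b/D) (-c/D) (a/D) = mat2 1 0 0 1"
    using assms(1) by (simp add: mat2_mult mat2_eq_iff field_simps e)
  show "mat2 (d/D) (-b/D) (-c/D) (a/D) ** mat2 a b c d = mat2 1 0 0 1"
    using assms(1) by (simp add: mat2_mult mat2_eq_iff field_simps e)
qed

lemma inv2: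
  fixes P :: "'a::field^2^2"
  assumes "det P \<noteq> 0"
  shows "P ** inv2 P = mat 1" "inv2 P ** P = mat 1" "matrix_inv P = inv2 P"
proof -
  obtain a b c d where P: "P = mat2 a b c d" by (metis mat2_eta)
  have d: "a*d - b*c \<noteq> 0" using assms by (simp add: P det_mat2)
  show 1: "P ** inv2 P = mat 1" using inv2_aux[OF d refl]
    by (simp add: P inv2_def mat2_one det_mat2)
  show 2: "inv2 P ** P = mat 1" using inv2_aux[OF d refl]
    by (simp add: P inv2_def mat2_one det_mat2)
  show "matrix_inv P = inv2 P" using 1 2 by (rule matrix_inv_unique)
qed

lemma det_inv2: "det (P::'a::field^2^2) \<noteq> 0 \<Longrightarrow> det (inv2 P) = 1 / det P"
  using inv2(1)[of P] det_mul[of P "inv2 P"] by (simp add: field_simps)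

lemma conj_iff:
  "X \<in> conj_class (A::'a::field^2^2) \<longleftrightarrow> (\<exists>P. (det P = 1 \<or> det P = -1) \<and> X ** P = P ** A)"
proof
  assume "X \<in> conj_class A"
  then obtain P where P: "P \<in> ESL" "X = P ** A ** matrix_inv P" unfolding conj_class_def by blast
  have d: "det P \<noteq> 0" using P(1) by (auto simp: ESL_def)
  have "X ** P = P ** A" using P(2) inv2[OF d] by (simp flip: matrix_mul_assoc)
  then show "\<exists>P. (det P = 1 \<or> det P = -1) \<and> X ** P = P ** A" using P(1) by (auto simp: ESL_def)
next
  assume "\<exists>P. (det P = 1 \<or> det P = -1) \<and> X ** P = P ** A"
  then obtain P where P: "det P = 1 \<or> det P = -1" "X ** P = P ** A" by blast
  have d: "det P \<noteq> 0" using P(1) by auto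
  have "P ** A ** matrix_inv P = X ** P ** inv2 P" using P(2) inv2[OF d] by simp
  also have "\<dots> = X" using inv2[OF d] by (simp flip: matrix_mul_assoc)
  finally show "X \<in> conj_class A" unfolding conj_class_def ESL_def using P(1) by force
qed

lemma conj_refl: "A \<in> conj_class (A::'a::field^2^2)"
  unfolding conj_iff by (rule exI[of _ "mat 1"]) simp

lemma conj_trans:
  assumes "X \<in> conj_class A" "A \<in> conj_class (B::'a::field^2^2)"
  shows "X \<in> conj_class B"
proof -
  obtain P where P: "det P = 1 \<or> det P = -1" "X ** P = P ** A" using assms(1) conj_iff by blast
  obtain Q where Q: "det Q = 1 \<or> det Q = -1" "A ** Q = Q ** B" using assms(2) conj_iff by blast
  have "X ** (P ** Q) = P ** Q ** B" using P(2) Q(2) by (metis matrix_mul_assoc)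
  moreover have "det (P ** Q) = 1 \<or> det (P ** Q) = -1" using P(1) Q(1) by (auto simp: det_mul)
  ultimately show ?thesis unfolding conj_iff by blast
qed

lemma conj_sym:
  assumes "X \<in> conj_class (A::'a::field^2^2)"
  shows "A \<in> conj_class X"
proof -
  obtain P where P: "det P = 1 \<or> det P = -1" "X ** P = P ** A" using assms conj_iff by blast
  have d: "det P \<noteq> 0" using P(1) by auto
  have "A ** inv2 P = inv2 P ** P ** A ** inv2 P" using inv2[OF d] by simp
  also have "\<dots> = inv2 P ** X ** (P ** inv2 P)" using P(2) by (metis matrix_mul_assoc)
  also have "\<dots> = inv2 P ** X" using inv2[OF d] by simp
  finally have "A ** inv2 P = inv2 P ** X" .
  moreover have "det (inv2 P) = 1 \<or> det (inv2 P) = -1" using P(1) det_inv2[OF d] by auto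
  ultimately show ?thesis unfolding conj_iff by blast
qed

lemma conj_eq:
  assumes "X \<in> conj_class (A::'a::field^2^2)"
  shows "conj_class X = conj_class A"
  using assms conj_trans conj_sym by blast

lemma conj_det:
  assumes "X \<in> conj_class (A::'a::field^2^2)"
  shows "det X = det A"
proof -
  obtain P where P: "det P = 1 \<or> det P = -1" "X ** P = P ** A" using assms conj_iff by blast
  have "det X * det P = det A * det P" using arg_cong[OF P(2), of det] by (simp add: det_mul mult.commute)
  then show ?thesis using P(1) by auto
qed

lemma conj_trace:
  assumes "X \<in> conj_class (A::'a::field^2^2)"
  shows "trace X = trace A"
proof -
  obtain P where P: "P \<in> ESL" "X = P ** A ** matrix_inv P" using assms unfolding conj_class_def by blast
  have d: "det P \<noteq> 0" using P(1) by (auto simp: ESL_def)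
  have "trace X = trace (P ** (A ** inv2 P))" using P(2) inv2[OF d] by (simp add: matrix_mul_assoc)
  also have "\<dots> = trace (A ** inv2 P ** P)" by (rule trace_mul_sym)
  also have "\<dots> = trace A" using inv2[OF d] by (simp flip: matrix_mul_assoc)
  finally show ?thesis .
qed

definition qf :: "'a::field^2^2 \<Rightarrow> 'a \<Rightarrow> 'a \<Rightarrow> 'a" where
  "qf F x y = F$2$1*x^2 + (F$2$2 - F$1$1)*x*y - F$1$2*y^2"

lemma qf_transform:
  fixes X A P :: "'a::field^2^2"
  assumes "X ** P = P ** A"
  shows "qf X (P$1$1*x + P$1$2*y) (P$2$1*x + P$2$2*y) = det P * qf A x y"
proof -
  obtain a b c d where A: "A = mat2 a b c d" by (metis mat2_eta)
  obtain x1 x2 x3 x4 where X: "X = mat2 x1 x2 x3 x4" by (metis mat2_eta)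
  obtain p1 p2 p3 p4 where P: "P = mat2 p1 p2 p3 p4" by (metis mat2_eta)
  have eq: "x1*p1+x2*p3 = p1*a+p2*c" "x1*p2+x2*p4 = p1*b+p2*d" "x3*p1+x4*p3 = p3*a+p4*c" "x3*p2+x4*p4 = p3*b+p4*d"
    using assms by (simp_all add: A X P mat2_mult mat2_eq_iff)
  have "qf X (P$1$1*x + P$1$2*y) (P$2$1*x + P$2$2*y) =
     (p1*x+p2*y)*((x3*p1+x4*p3)*x + (x3*p2+x4*p4)*y) - (p3*x+p4*y)*((x1*p1+x2*p3)*x + (x1*p2+x2*p4)*y)"
    unfolding X P qf_def mat2_nth by (simp add: algebra_simps power2_eq_square)
  also have "\<dots> = (p1*x+p2*y)*((p3*a+p4*c)*x + (p3*b+p4*d)*y) - (p3*x+p4*y)*((p1*a+p2*c)*x + (p1*b+p2*d)*y)"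
    by (simp only: eq)
  also have "\<dots> = det P * qf A x y"
    unfolding A P qf_def mat2_nth det_mat2 by (simp add: algebra_simps power2_eq_square)
  finally show ?thesis .
qed

lemma qf_vals:
  assumes "X \<in> conj_class (A::'a::field^2^2)"
  shows "\<exists>x' y'. qf X x y = qf A x' y' \<or> qf X x y = - qf A x' y'"
proof -
  obtain P where P: "det P = 1 \<or> det P = -1" "A ** P = P ** X"
    using conj_sym[OF assms] conj_iff by blast
  show ?thesis using qf_transform[OF P(2), of x y] P(1) by (metis mult_1 mult_minus1 minus_minus)
qed

definition Pm :: "'a::field^2^2 \<Rightarrow> 'a \<Rightarrow> 'a \<Rightarrow> 'a^2^2" where
  "Pm F x y = mat2 x (F$1$1*x + F$1$2*y) y (F$2$1*x + F$2$2*y)"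

lemma Pm_comm: "F ** Pm F x y = Pm F x y ** mat2 0 (-det F) 1 (trace F)"
proof -
  obtain a b c d where F: "F = mat2 a b c d" by (metis mat2_eta)
  show ?thesis unfolding F Pm_def by (simp add: mat2_mult mat2_eq_iff det_mat2 trace_mat2 algebra_simps)
qed

lemma Pm_det: "det (Pm F x y) = qf F x y"
  unfolding Pm_def qf_def det_mat2 by (simp add: algebra_simps power2_eq_square)

lemma conj_by_qf:
  fixes F G :: "'a::field^2^2"
  assumes "det F = det G" "trace F = trace G" "qf F w1 w2 = qf G u1 u2" "qf G u1 u2 \<noteq> 0"
  shows "F \<in> conj_class G"
proof -
  define PF where "PF = Pm F w1 w2"
  define PG where "PG = Pm G u1 u2"
  define M where "M = mat2 0 (-det G) 1 (trace G)"
  have dG: "det PG \<noteq> 0" using assms(4) by (simp add: PG_def Pm_det)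
  have hF: "F ** PF = PF ** M" using Pm_comm[of F] assms(1,2) by (simp add: PF_def M_def)
  have hG: "G ** PG = PG ** M" using Pm_comm[of G] by (simp add: PG_def M_def)
  have c: "M ** inv2 PG = inv2 PG ** G"
  proof -
    have "inv2 PG ** G = inv2 PG ** G ** (PG ** inv2 PG)" using inv2[OF dG] by simp
    also have "\<dots> = inv2 PG ** (G ** PG) ** inv2 PG" by (simp add: matrix_mul_assoc)
    also have "\<dots> = (inv2 PG ** PG) ** M ** inv2 PG" using hG by (simp add: matrix_mul_assoc)
    also have "\<dots> = M ** inv2 PG" using inv2[OF dG] by simp
    finally show ?thesis by simp
  qed
  define P where "P = PF ** inv2 PG"
  have "F ** P = (F ** PF) ** inv2 PG" by (simp add: P_def matrix_mul_assoc)
  also have "\<dots> = PF ** (M ** inv2 PG)" using hF by (simp add: matrix_mul_assoc)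
  also have "\<dots> = P ** G" using c by (simp add: P_def matrix_mul_assoc)
  finally have "F ** P = P ** G" .
  moreover have "det P = 1" using assms(3,4) dG
    by (simp add: P_def det_mul det_inv2 PF_def PG_def Pm_det)
  ultimately show ?thesis unfolding conj_iff by blast
qed


lemma two_ne0:
  assumes "odd CARD('a::{finite,field})"
  shows "(2::'a) \<noteq> 0"
proof
  assume "(2::'a) = 0"
  then have "of_nat 2 = (0::'a)" by simp
  then have "CHAR('a) dvd 2" by (simp only: of_nat_eq_0_iff_char_dvd)
  moreover have "CHAR('a) \<noteq> 1" by simp
  moreover have "CHAR('a) > 0" by (rule finite_imp_CHAR_pos) simp
  ultimately have "CHAR('a) = 2" using dvd_imp_le[of "CHAR('a)" 2]
    by (metis One_nat_def dvd_refl le_antisym less_2_cases not_less zero_less_numeral dvd_antisym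
        nat_dvd_1_iff_1 nat_neq_iff)
  then show False using CHAR_dvd_CARD[where 'a='a] assms by simp
qed

lemma sq_card: "CARD('a::{finite,field}) \<le> 2 * card (range (\<lambda>u::'a. u^2))"
proof -
  define S where "S = range (\<lambda>u::'a. u^2)"
  define r where "r s = (SOME x::'a. x^2 = s)" for s
  have r: "r (u^2) ^2 = u^2" for u unfolding r_def by (rule someI_ex) blast
  have pm: "u^2 = w^2 \<Longrightarrow> u = w \<or> u = - w" for u w :: 'a
    by (metis power2_eq_iff)
  define g where "g u = (u^2, u = r (u^2))" for u
  have "inj g"
  proof
    fix u w assume "g u = g w"
    then have e: "u^2 = w^2" "(u = r (u^2)) = (w = r (w^2))" by (auto simp: g_def)
    show "u = w"
    proof (cases "u = r (u^2)")
      case True then show ?thesis using e by simp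
    next
      case False
      then have "u = - r (u^2)" using pm[OF r[of u, symmetric]] by auto
      moreover have "w = - r (u^2)" using False e pm[OF r[of w, symmetric]] by auto
      ultimately show ?thesis by simp
    qed
  qed
  moreover have "g ` UNIV \<subseteq> S \<times> UNIV" by (auto simp: g_def S_def)
  ultimately have "card (UNIV::'a set) \<le> card (S \<times> (UNIV::bool set))"
    by (intro card_inj_on_le) auto
  then show ?thesis by (simp add: S_def card_cartesian_product mult.commute)
qed

lemma range_sq: "range (\<lambda>u::'a::field. u^2) = insert 0 QR"
  unfolding QR_def by (auto simp: image_def)

lemma QR_QN_part: "QR \<union> QN = UNIV - {0}" "QR \<inter> QN = {}"
  unfolding QN_def QR_def by auto

lemma arith1: "(a::nat) + b = N - 1 \<Longrightarrow> N = 2*k+1 \<Longrightarrow> N \<le> 2*(a+1) \<Longrightarrow> b \<le> a"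
  by presburger

lemma arith2: "(a::nat) + a \<le> N \<Longrightarrow> N = 2*k+1 \<Longrightarrow> N \<le> 2*a \<Longrightarrow> False"
  by presburger

lemma QN_card_le:
  assumes "odd CARD('a::{finite,field})"
  shows "card (QN::'a set) \<le> card (QR::'a set)"
proof -
  have "0 \<notin> (QR::'a set)" by (simp add: QR_def)
  then have c1: "CARD('a) \<le> 2 * (card (QR::'a set) + 1)" using sq_card[where 'a='a] range_sq[where 'a='a]
    by simp
  have "card (QR \<union> QN :: 'a set) = card (QR::'a set) + card (QN::'a set)"
    using QR_QN_part by (intro card_Un_disjoint) auto
  moreover have "card (QR \<union> QN :: 'a set) = CARD('a) - 1" unfolding QR_QN_part(1) by (simp add: card_Diff_singleton)
  ultimately have "card (QR::'a set) + card (QN::'a set) = CARD('a) - 1" using QR_QN_part by simp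
  moreover obtain k where "CARD('a) = 2*k+1" using assms oddE by blast
  ultimately show ?thesis using c1 arith1 by blast
qed

lemma QN_mult:
  assumes "odd CARD('a::{finite,field})" "x \<in> QN" "y \<in> (QN::'a set)"
  shows "x * y \<in> QR"
proof -
  have x0: "x \<noteq> 0" using assms(2) by (simp add: QN_def)
  have sub: "(\<lambda>z. x * z) ` QR \<subseteq> QN"
  proof
    fix v assume "v \<in> (\<lambda>z. x * z) ` QR"
    then obtain w where w: "w \<noteq> 0" "v = x * w^2" by (auto simp: QR_def)
    have "v \<notin> QR"
    proof
      assume "v \<in> QR"
      then obtain s where "v = s^2" by (auto simp: QR_def)
      then have "x = (s/w)^2" using w by (simp add: field_simps power2_eq_square)
      moreover have "s/w \<noteq> 0" using \<open>v = s^2\<close> w x0 \<open>v \<in> QR\<close> by (auto simp: QR_def)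
      ultimately show False using assms(2) x0 \<open>x = (s/w)^2\<close> unfolding QN_def QR_def by blast
    qed
    moreover have "v \<noteq> 0" using w x0 by simp
    ultimately show "v \<in> QN" by (simp add: QN_def)
  qed
  have "card ((\<lambda>z. x * z) ` QR) = card (QR::'a set)"
    using x0 by (intro card_image) (auto simp: inj_on_def)
  have "(\<lambda>z. x * z) ` QR = QN"
  proof (rule card_subset_eq)
    show "finite (QN::'a set)" by simp
    show "(\<lambda>z. x * z) ` QR \<subseteq> QN" by (rule sub)
    have "card ((\<lambda>z. x * z) ` QR) \<le> card (QN::'a set)" using sub by (intro card_mono) auto
    then show "card ((\<lambda>z. x * z) ` QR) = card (QN::'a set)"
      using QN_card_le[OF assms(1)] \<open>card ((\<lambda>z. x * z) ` QR) = card (QR::'a set)\<close> by linarith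
  qed
  then obtain z where z: "z \<in> QR" "y = x * z" using assms(3) by blast
  then obtain w where w: "w \<noteq> 0" "z = w^2" by (auto simp: QR_def)
  have "x * y = (x*w)^2" using z w by (simp add: power2_eq_square)
  moreover have "x*w \<noteq> 0" using x0 w by simp
  moreover have "x*y \<noteq> 0" using calculation by simp
  ultimately show ?thesis unfolding QR_def by blast
qed

lemma universal:
  fixes a b c :: "'a::{finite,field}"
  assumes "odd CARD('a)" "b^2 - 4*a*c \<noteq> 0"
  shows "\<exists>x y. a*x^2 + b*x*y + c*y^2 = 1"
proof (cases "a = 0")
  case True
  then have b: "b \<noteq> 0" using assms(2) by simp
  show ?thesis using True b by (intro exI[of _ "(1-c)/b"] exI[of _ 1]) (simp add: field_simps)
next
  case False
  have two: "(2::'a) \<noteq> 0" using two_ne0[OF assms(1)] .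
  define D where "D = b^2 - 4*a*c"
  have D: "D \<noteq> 0" using assms(2) by (simp add: D_def)
  define S where "S = range (\<lambda>u::'a. u^2)"
  define Tset where "Tset = image (\<lambda>v. 4*a + D * v) S"
  have cT: "card Tset = card S" unfolding Tset_def using D by (intro card_image) (auto simp: inj_on_def)
  have "S \<inter> Tset \<noteq> {}"
  proof
    assume "S \<inter> Tset = {}"
    then have "card (S \<union> Tset) = card S + card Tset" by (intro card_Un_disjoint) auto
    moreover have "card (S \<union> Tset) \<le> CARD('a)" by (rule card_mono) auto
    moreover obtain k where "CARD('a) = 2*k+1" using assms(1) oddE by blast
    ultimately show False using sq_card[where 'a='a] cT arith2 unfolding S_def by metis
  qed
  then obtain u z where uz: "u^2 = 4*a + D*z^2" unfolding S_def Tset_def by auto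
  define x where "x = (u - b*z)/(2*a)"
  have hx: "2*a*x + b*z = u" using False two by (simp add: x_def field_simps)
  have "4*a*(a*x^2 + b*x*z + c*z^2) = (2*a*x + b*z)^2 - D*z^2"
    by (simp add: D_def algebra_simps power2_eq_square)
  also have "\<dots> = 4*a" using hx uz by simp
  finally have "4*a*(a*x^2 + b*x*z + c*z^2) = 4*a*1" by simp
  moreover have "4*a \<noteq> 0" using False two by (metis mult_eq_0_iff numeral_Bit0 mult_2 one_add_one)
  ultimately show ?thesis by (metis mult_left_cancel)
qed


lemma qf_mat2: "qf (mat2 a b c d) x y = c*x^2 + (d-a)*x*y - b*y^2"
  by (simp add: qf_def)

lemma QR_neg:
  assumes "i^2 = (-1::'a::field)" "x \<in> QR"
  shows "-x \<in> (QR::'a set)"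
proof -
  obtain y where y: "y \<noteq> 0" "x = y^2" using assms(2) by (auto simp: QR_def)
  have "-x = (i*y)^2" using assms(1) y by (simp add: power_mult_distrib)
  moreover have "i \<noteq> 0" using assms(1) by auto
  then have "i*y \<noteq> 0" using y by simp
  moreover have "-x \<noteq> 0" using y by simp
  ultimately show ?thesis unfolding QR_def by blast
qed

lemma QN_neg:
  assumes "i^2 = (-1::'a::field)" "x \<in> QN"
  shows "-x \<in> (QN::'a set)"
  using assms QR_neg[OF assms(1), of "-x"] by (auto simp: QN_def)

lemma nonzero_cases: "(x::'a::field) \<noteq> 0 \<Longrightarrow> x \<in> QR \<or> x \<in> QN"
  by (auto simp: QN_def)

lemma QR_sq: "x \<in> QR \<Longrightarrow> \<exists>s. s \<noteq> 0 \<and> x = s^2"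
  by (auto simp: QR_def)

lemma sq_QR: "(s::'a::field) \<noteq> 0 \<Longrightarrow> s^2 \<in> QR"
  by (auto simp: QR_def)

lemma nu_sq_not_QR:
  assumes "\<nu> \<in> QN"
  shows "\<nu> * r^2 \<notin> (QR::'a::field set)"
proof
  have nu0: "\<nu> \<noteq> 0" using assms by (simp add: QN_def)
  assume h: "\<nu> * r^2 \<in> QR"
  then obtain s where s: "s \<noteq> 0" "\<nu> * r^2 = s^2" by (auto simp: QR_def)
  then have r: "r \<noteq> 0" by auto
  have "\<nu> = (s/r)^2" using s r by (simp add: field_simps power2_eq_square)
  moreover have "s/r \<noteq> 0" using s r by simp
  ultimately have "\<nu> \<in> QR" unfolding QR_def using nu0 by blast
  then show False using assms by (simp add: QN_def)
qed

lemma qf_Bm: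
  fixes t \<nu> x y :: "'a::field"
  assumes "(2::'a::field) \<noteq> 0" "\<nu> \<noteq> 0"
  shows "qf (mat2 0 (-(t^2 / (4 * \<nu>))) \<nu> t) x y = \<nu> * (x + t*y/(2*\<nu>))^2"
proof -
  have "(4::'a) = 2*2" by simp
  then have "(4::'a) \<noteq> 0" using assms(1) by (metis mult_eq_0_iff)
  then show ?thesis using assms by (simp add: qf_mat2 field_simps power2_eq_square)
qed

lemma det_Bm:
  fixes t \<nu> :: "'a::field"
  assumes "\<nu> \<noteq> 0"
  shows "det (mat2 0 (-(t^2 / (4 * \<nu>))) \<nu> t) = t^2/4"
  using assms by (simp add: det_mat2)

lemma memb:
  fixes F :: "'a::{finite,field}^2^2" and i \<nu> :: 'a
  assumes odd: "odd CARD('a)" and i: "i^2 = -1" and nu: "\<nu> \<in> QN"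
  defines "\<Delta> \<equiv> det F" and "t \<equiv> trace F" and "\<beta> \<equiv> F$1$2" and "\<gamma> \<equiv> F$2$1"
  shows "(t^2 - 4*\<Delta> \<noteq> 0 \<longrightarrow> F \<in> conj_class (mat2 0 (-\<Delta>) 1 t)) \<and>
           (t^2 - 4*\<Delta> = 0 \<longrightarrow>
              ((\<beta> \<in> QR \<or> \<gamma> \<in> QR) \<longrightarrow> F \<in> conj_class (mat2 0 (-\<Delta>) 1 t)) \<and>
              ((\<beta> \<in> QN \<or> \<gamma> \<in> QN) \<longrightarrow> F \<in> conj_class (mat2 0 (-(t^2 / (4 * \<nu>))) \<nu> t)) \<and>
              ((\<beta> = 0 \<and> \<gamma> = 0) \<longrightarrow> F \<in> conj_class (mat2 (t/2) 0 0 (t/2))) \<and>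
              \<not> ((\<beta> \<in> QR \<and> \<gamma> \<in> QN) \<or> (\<beta> \<in> QN \<and> \<gamma> \<in> QR)))"
proof -
  have two: "(2::'a) \<noteq> 0" using two_ne0[OF odd] .
  have nu0: "\<nu> \<noteq> 0" using nu by (simp add: QN_def)
  have "(4::'a) = 2*2" by simp
  then have four: "(4::'a) \<noteq> 0" using two by (metis mult_eq_0_iff)
  obtain a d where F: "F = mat2 a \<beta> \<gamma> d" unfolding \<beta>_def \<gamma>_def by (metis mat2_eta)
  have Dl: "\<Delta> = a*d - \<beta>*\<gamma>" and tl: "t = a + d" by (simp_all add: F \<Delta>_def t_def det_mat2 trace_mat2)
  have disc: "t^2 - 4*\<Delta> = (d-a)^2 + 4*\<beta>*\<gamma>" by (simp add: Dl tl algebra_simps power2_eq_square)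
  define M where "M = mat2 0 (-\<Delta>) 1 t"
  define B where "B = mat2 0 (-(t^2 / (4 * \<nu>))) \<nu> t"
  have detM: "det F = det M" "trace F = trace M"
    by (simp_all add: M_def det_mat2 trace_mat2 \<Delta>_def t_def)
  have qM: "qf M x 0 = x^2" for x by (simp add: M_def qf_mat2)
  have qF: "qf F x y = \<gamma>*x^2 + (d-a)*x*y - \<beta>*y^2" for x y by (simp add: F qf_mat2)
  show ?thesis
  proof (intro conjI impI)
    assume h: "t^2 - 4*\<Delta> \<noteq> 0"
    have "(d-a)^2 - 4*\<gamma>*(-\<beta>) \<noteq> 0" using h disc by (simp add: algebra_simps)
    then obtain x y where "\<gamma>*x^2 + (d-a)*x*y + (-\<beta>)*y^2 = 1" using universal[OF odd] by blast
    then have "qf F x y = qf M 1 0" by (simp add: qF qM)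
    then show "F \<in> conj_class (mat2 0 (-\<Delta>) 1 t)"
      using conj_by_qf[OF detM, of x y 1 0] qM[of 1] unfolding M_def by simp
  next
    assume h: "t^2 - 4*\<Delta> = 0" "\<beta> \<in> QR \<or> \<gamma> \<in> QR"
    obtain x y s where "qf F x y = s^2" "s \<noteq> 0"
      using h(2)
    proof (elim disjE)
      assume "\<beta> \<in> QR"
      then obtain s where "s \<noteq> 0" "-\<beta> = s^2" using QR_sq QR_neg[OF i] by blast
      then show ?thesis using that[of 0 1 s] by (simp add: qF)
    next
      assume "\<gamma> \<in> QR"
      then obtain s where "s \<noteq> 0" "\<gamma> = s^2" using QR_sq by blast
      then show ?thesis using that[of 1 0 s] by (simp add: qF)
    qed
    then show "F \<in> conj_class (mat2 0 (-\<Delta>) 1 t)"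
      using conj_by_qf[OF detM, of x y s 0] qM[of s] unfolding M_def by simp
  next
    assume h: "t^2 - 4*\<Delta> = 0" "\<beta> \<in> QN \<or> \<gamma> \<in> QN"
    obtain x y s where xy: "qf F x y = \<nu> * s^2" "s \<noteq> 0"
      using h(2)
    proof (elim disjE)
      assume "\<beta> \<in> QN"
      then have "-\<beta> * \<nu> \<in> QR" using QN_mult[OF odd _ nu] QN_neg[OF i] by blast
      then obtain r where r: "r \<noteq> 0" "-\<beta> * \<nu> = r^2" using QR_sq by blast
      then have "-\<beta> = \<nu> * (r/\<nu>)^2" using nu0 by (simp add: field_simps power2_eq_square)
      then show ?thesis using that[of 0 1 "r/\<nu>"] r nu0 by (simp add: qF)
    next
      assume "\<gamma> \<in> QN"
      then have "\<gamma> * \<nu> \<in> QR" using QN_mult[OF odd _ nu] by blast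
      then obtain r where r: "r \<noteq> 0" "\<gamma> * \<nu> = r^2" using QR_sq by blast
      then have "\<gamma> = \<nu> * (r/\<nu>)^2" using nu0 by (simp add: field_simps power2_eq_square)
      then show ?thesis using that[of 1 0 "r/\<nu>"] r nu0 by (simp add: qF)
    qed
    have "det F = det B" using h(1) nu0 det_Bm[OF nu0, of t] two four
      by (simp add: B_def \<Delta>_def[symmetric] field_simps)
    moreover have "trace F = trace B" by (simp add: B_def trace_mat2 t_def)
    moreover have "qf B s 0 = \<nu> * s^2" using qf_Bm[OF two nu0] by (simp add: B_def)
    ultimately show "F \<in> conj_class (mat2 0 (-(t^2 / (4 * \<nu>))) \<nu> t)"
      using conj_by_qf[of F B x y s 0] xy nu0 unfolding B_def by simp
  next
    assume h: "t^2 - 4*\<Delta> = 0" "\<beta> = 0 \<and> \<gamma> = 0"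
    then have "(d-a)^2 = 0" using disc by simp
    then have "a = d" by simp
    then have "F = mat2 (t/2) 0 0 (t/2)" using h(2) two by (simp add: F tl field_simps)
    then show "F \<in> conj_class (mat2 (t/2) 0 0 (t/2))" using conj_refl by metis
  next
    assume h: "t^2 - 4*\<Delta> = 0"
    have bg: "\<beta> * \<gamma> = - (((d - a) / 2)^2)" using h disc two four by (simp add: field_simps power2_eq_square)
    have key: "y \<in> QR \<Longrightarrow> z \<in> QN \<Longrightarrow> y * z = - (((d - a) / 2)^2) \<Longrightarrow> False" for y z
    proof -
      assume yz: "y \<in> QR" "z \<in> QN" "y * z = - (((d - a) / 2)^2)"
      obtain s where s: "s \<noteq> 0" "y = s^2" using QR_sq yz(1) by blast
      have "- z = ((d - a) / 2 / s)^2" using yz(3) s four by (simp add: field_simps power2_eq_square)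
      moreover have "-z \<noteq> 0" using yz(2) by (simp add: QN_def)
      ultimately have "-z \<in> QR" by (metis sq_QR power_zero_numeral)
      then have "z \<in> QR" using QR_neg[OF i, of "-z"] by simp
      then show False using yz(2) by (simp add: QN_def)
    qed
    show "\<not> ((\<beta> \<in> QR \<and> \<gamma> \<in> QN) \<or> (\<beta> \<in> QN \<and> \<gamma> \<in> QR))"
      using key[of \<beta> \<gamma>] key[of \<gamma> \<beta>] bg by (auto simp: mult.commute)
  qed
qed


lemma cc_eq_inv:
  "conj_class X = conj_class (Y::'a::field^2^2) \<Longrightarrow> det X = det Y \<and> trace X = trace Y"
  using conj_refl[of X] conj_det conj_trace by blast

theorem mainTheorem4:
  fixes i \<nu> :: "'a::{finite,field}" and p l :: nat
    and C :: "'a \<Rightarrow> 'a \<Rightarrow> ('a^2^2) set" and Cb D :: "'a \<Rightarrow> ('a^2^2) set"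
  assumes "prime p" and "odd p" and "l \<ge> 1" and "CARD('a) = p ^ l"
    and "CARD('a) mod 4 = 1"
    and "i^2 = -1" and "\<nu> \<in> QN"
    and C_def: "\<And>\<Delta> t. C \<Delta> t = conj_class (mat2 0 (-\<Delta>) 1 t)"
    and Cb_def: "\<And>t. Cb t = conj_class (mat2 0 (-(t^2 / (4 * \<nu>))) \<nu> t)"
    and D_def: "\<And>t. D t = conj_class (mat2 (t/2) 0 0 (t/2))"
  shows "{conj_class A | A. A \<in> ESL}
           = (\<Union>\<Delta>\<in>{1,-1}. range (C \<Delta>)) \<union> Cb ` {2,-2,2*i,-2*i} \<union> D ` {2,-2,2*i,-2*i}
      \<and> card ((\<Union>\<Delta>\<in>{1,-1}. range (C \<Delta>)) \<union> Cb ` {2,-2,2*i,-2*i} \<union> D ` {2,-2,2*i,-2*i})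
           = 2 * CARD('a) + 8
      \<and> (\<forall>F\<in>ESL. let \<Delta> = det F; t = trace F; \<beta> = F$1$2; \<gamma> = F$2$1 in
           (t^2 - 4*\<Delta> \<noteq> 0 \<longrightarrow> F \<in> C \<Delta> t) \<and>
           (t^2 - 4*\<Delta> = 0 \<longrightarrow>
              ((\<beta> \<in> QR \<or> \<gamma> \<in> QR) \<longrightarrow> F \<in> C \<Delta> t) \<and>
              ((\<beta> \<in> QN \<or> \<gamma> \<in> QN) \<longrightarrow> F \<in> Cb t) \<and>
              ((\<beta> = 0 \<and> \<gamma> = 0) \<longrightarrow> F \<in> D t) \<and>
              \<not> ((\<beta> \<in> QR \<and> \<gamma> \<in> QN) \<or> (\<beta> \<in> QN \<and> \<gamma> \<in> QR))))"
proof -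
  have "CARD('a) mod 2 = 1" using assms(5) mod_mod_cancel[of 2 4 "CARD('a)"] by simp
  then have odd: "odd CARD('a)" by (simp add: odd_iff_mod_2_eq_one)
  have i: "i^2 = -1" and nu: "\<nu> \<in> QN" using assms(6,7) .
  have two: "(2::'a) \<noteq> 0" using two_ne0[OF odd] .
  have "(4::'a) = 2*2" by simp
  then have four: "(4::'a) \<noteq> 0" using two by (metis mult_eq_0_iff)
  have nu0: "\<nu> \<noteq> 0" using nu by (simp add: QN_def)
  have i0: "i \<noteq> 0" using i by auto
  have m1: "(1::'a) \<noteq> -1"
  proof
    assume "(1::'a) = -1"
    then have "(2::'a) = 1 + -1" by (metis one_add_one)
    then show False using two by simp
  qed
  have m1QR: "(1::'a) \<in> QR" "(-1::'a) \<in> QR" using sq_QR[of 1] sq_QR[OF i0] i by auto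
  define T4 where "T4 = {2,-2,2*i,-2*i :: 'a}"
  have t4: "t \<in> T4 \<longleftrightarrow> t^2 = 4 \<or> t^2 = -4" for t
  proof
    assume "t \<in> T4" then show "t^2 = 4 \<or> t^2 = -4"
      using i by (auto simp: T4_def power_mult_distrib)
  next
    assume "t^2 = 4 \<or> t^2 = -4"
    then have "t^2 = 2^2 \<or> t^2 = (2*i)^2" using i by (auto simp: power_mult_distrib)
    then have "t = 2 \<or> t = -2 \<or> t = 2*i \<or> t = -(2*i)" using power2_eq_iff by blast
    then show "t \<in> T4" unfolding T4_def by auto
  qed
  have P3: "\<forall>F\<in>ESL. let \<Delta> = det F; t = trace F; \<beta> = F$1$2; \<gamma> = F$2$1 in
           (t^2 - 4*\<Delta> \<noteq> 0 \<longrightarrow> F \<in> C \<Delta> t) \<and>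
           (t^2 - 4*\<Delta> = 0 \<longrightarrow>
              ((\<beta> \<in> QR \<or> \<gamma> \<in> QR) \<longrightarrow> F \<in> C \<Delta> t) \<and>
              ((\<beta> \<in> QN \<or> \<gamma> \<in> QN) \<longrightarrow> F \<in> Cb t) \<and>
              ((\<beta> = 0 \<and> \<gamma> = 0) \<longrightarrow> F \<in> D t) \<and>
              \<not> ((\<beta> \<in> QR \<and> \<gamma> \<in> QN) \<or> (\<beta> \<in> QN \<and> \<gamma> \<in> QR)))"
    unfolding Let_def C_def Cb_def D_def using memb[OF odd i nu] by blast
  define CS where "CS = (\<Union>\<Delta>\<in>{1,-1}. range (C \<Delta>))"
  have sub1: "conj_class A \<in> CS \<union> Cb ` T4 \<union> D ` T4" if A: "A \<in> ESL" for A
  proof -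
    define \<Delta> where "\<Delta> = det A"
    define t where "t = trace A"
    have dA: "\<Delta> = 1 \<or> \<Delta> = -1" using A by (simp add: ESL_def \<Delta>_def)
    note M = memb[OF odd i nu, of A]
    show ?thesis
    proof (cases "t^2 - 4*\<Delta> = 0")
      case False
      then have "A \<in> C \<Delta> t" using M by (simp add: C_def \<Delta>_def t_def Let_def)
      then have "conj_class A = C \<Delta> t" by (simp add: C_def conj_eq)
      then show ?thesis using dA unfolding CS_def by blast
    next
      case True
      then have "t^2 = 4 * \<Delta>" by simp
      then have tT: "t \<in> T4" using dA t4 by auto
      consider "A$1$2 = 0 \<and> A$2$1 = 0" | "A$1$2 \<in> QR \<or> A$2$1 \<in> QR" | "A$1$2 \<in> QN \<or> A$2$1 \<in> QN"
        using nonzero_cases by blast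
      then show ?thesis
      proof cases
        case 1
        then have "A \<in> D t" using M True by (simp add: D_def \<Delta>_def t_def Let_def)
        then have "conj_class A = D t" by (simp add: D_def conj_eq)
        then show ?thesis using tT by blast
      next
        case 2
        then have "A \<in> C \<Delta> t" using M True by (simp add: C_def \<Delta>_def t_def Let_def)
        then have "conj_class A = C \<Delta> t" by (simp add: C_def conj_eq)
        then show ?thesis using dA unfolding CS_def by blast
      next
        case 3
        then have "A \<in> Cb t" using M True by (simp add: Cb_def \<Delta>_def t_def Let_def)
        then have "conj_class A = Cb t" by (simp add: Cb_def conj_eq)
        then show ?thesis using tT by blast
      qed
    qed
  qed
  have detT: "t \<in> T4 \<Longrightarrow> t^2/4 = 1 \<or> t^2/4 = -1" for t using t4[of t] four by auto
  have sub2: "X \<in> {conj_class A | A. A \<in> ESL}" if X: "X \<in> CS \<union> Cb ` T4 \<union> D ` T4" for X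
    using X
  proof (elim UnE)
    assume "X \<in> CS"
    then obtain \<Delta> t where "\<Delta> \<in> {1,-1}" "X = conj_class (mat2 0 (-\<Delta>) 1 t)"
      unfolding CS_def C_def by blast
    moreover have "det (mat2 0 (-\<Delta>) 1 t) = \<Delta>" by (simp add: det_mat2)
    ultimately show ?thesis unfolding ESL_def by auto
  next
    assume "X \<in> Cb ` T4"
    then obtain t where tT: "t \<in> T4" and "X = conj_class (mat2 0 (-(t^2 / (4 * \<nu>))) \<nu> t)"
      unfolding Cb_def by blast
    moreover have "det (mat2 0 (-(t^2 / (4 * \<nu>))) \<nu> t) = t^2/4" by (rule det_Bm[OF nu0])
    ultimately have "det (mat2 0 (-(t^2 / (4 * \<nu>))) \<nu> t) = 1 \<or> det (mat2 0 (-(t^2 / (4 * \<nu>))) \<nu> t) = -1"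
      "X = conj_class (mat2 0 (-(t^2 / (4 * \<nu>))) \<nu> t)" using detT[OF tT] by metis+
    then show ?thesis unfolding ESL_def by blast
  next
    assume "X \<in> D ` T4"
    then obtain t where tT: "t \<in> T4" and "X = conj_class (mat2 (t/2) 0 0 (t/2))"
      unfolding D_def by blast
    moreover have "det (mat2 (t/2) 0 0 (t/2)) = t^2/4" by (simp add: det_mat2 power2_eq_square)
    ultimately have "det (mat2 (t/2) 0 0 (t/2)) = 1 \<or> det (mat2 (t/2) 0 0 (t/2)) = -1"
      "X = conj_class (mat2 (t/2) 0 0 (t/2))" using detT[OF tT] by metis+
    then show ?thesis unfolding ESL_def by blast
  qed
  have part1: "{conj_class A | A. A \<in> ESL} = CS \<union> Cb ` T4 \<union> D ` T4"
    using sub1 sub2 by blast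
  have qM: "qf (mat2 0 (-\<Delta>) 1 t) 1 0 = 1" for \<Delta> t by (simp add: qf_mat2)
  have qB: "qf (mat2 0 (-(t^2 / (4 * \<nu>))) \<nu> t) x y \<notin> QR" for t x y
    using qf_Bm[OF two nu0] nu_sq_not_QR[OF nu] by simp
  have qB1: "qf (mat2 0 (-(t^2 / (4 * \<nu>))) \<nu> t) 1 0 = \<nu>" for t by (simp add: qf_mat2)
  have qD: "qf (mat2 (t/2) 0 0 (t/2)) x y = 0" for t x y by (simp add: qf_mat2)
  have CinjE: "C d1 t1 = C d2 t2 \<Longrightarrow> d1 = d2 \<and> t1 = t2" for d1 d2 t1 t2
    using cc_eq_inv[of "mat2 0 (-d1) 1 t1" "mat2 0 (-d2) 1 t2"] unfolding C_def
    by (simp add: det_mat2 trace_mat2)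
  have CbinjE: "Cb t1 = Cb t2 \<Longrightarrow> t1 = t2" for t1 t2
    using cc_eq_inv[of "mat2 0 (-(t1^2 / (4 * \<nu>))) \<nu> t1" "mat2 0 (-(t2^2 / (4 * \<nu>))) \<nu> t2"]
    unfolding Cb_def by (simp add: trace_mat2)
  have DinjE: "D t1 = D t2 \<Longrightarrow> t1 = t2" for t1 t2
    using cc_eq_inv[of "mat2 (t1/2) 0 0 (t1/2)" "mat2 (t2/2) 0 0 (t2/2)"] two unfolding D_def
    by (simp add: trace_mat2 field_simps)
  have CCb: "C d1 t1 \<noteq> Cb t2" for d1 t1 t2
  proof
    assume "C d1 t1 = Cb t2"
    then have "mat2 0 (-d1) 1 t1 \<in> conj_class (mat2 0 (-(t2^2 / (4 * \<nu>))) \<nu> t2)"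
      unfolding C_def Cb_def using conj_refl by metis
    from qf_vals[OF this, of 1 0] obtain x y where
      "1 = qf (mat2 0 (-(t2^2 / (4 * \<nu>))) \<nu> t2) x y \<or> 1 = - qf (mat2 0 (-(t2^2 / (4 * \<nu>))) \<nu> t2) x y"
      using qM by metis
    then have "qf (mat2 0 (-(t2^2 / (4 * \<nu>))) \<nu> t2) x y \<in> QR" using m1QR
      by (metis minus_minus)
    then show False using qB by blast
  qed
  have CD: "C d1 t1 \<noteq> D t2" for d1 t1 t2
  proof
    assume "C d1 t1 = D t2"
    then have "mat2 0 (-d1) 1 t1 \<in> conj_class (mat2 (t2/2) 0 0 (t2/2))"
      unfolding C_def D_def using conj_refl by metis
    from qf_vals[OF this, of 1 0] show False by (auto simp: qf_mat2)
  qed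
  have CbD: "Cb t1 \<noteq> D t2" for t1 t2
  proof
    assume "Cb t1 = D t2"
    then have "mat2 0 (-(t1^2 / (4 * \<nu>))) \<nu> t1 \<in> conj_class (mat2 (t2/2) 0 0 (t2/2))"
      unfolding Cb_def D_def using conj_refl by metis
    from qf_vals[OF this, of 1 0] show False using nu0 by (auto simp: qf_mat2)
  qed
  have CS_img: "CS = (\<lambda>(d,t). C d t) ` ({1,-1} \<times> UNIV)" unfolding CS_def by auto
  have cCS: "card CS = 2 * CARD('a)"
  proof -
    have "card CS = card ({1,-1::'a} \<times> (UNIV::'a set))" unfolding CS_img
      by (rule card_image) (auto simp: inj_on_def dest: CinjE)
    also have "\<dots> = 2 * CARD('a)" using m1 by (simp add: card_cartesian_product)
    finally show ?thesis .
  qed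
  have cT4: "card T4 = 4"
  proof -
    have a: "(2::'a) \<noteq> -2"
    proof
      assume "(2::'a) = -2"
      then have "(4::'a) = 2 + -2" by (metis numeral_Bit0 numeral_One one_add_one)
      then show False using four by simp
    qed
    have b: "i \<noteq> 1" "i \<noteq> -1" using i m1 by auto
    have c1: "2*i \<noteq> -2"
    proof
      assume "2*i = -2"
      then have "2*i = 2*(-1::'a)" by simp
      then have "i = -1" using mult_left_cancel[OF two, of i "-1"] by metis
      then show False using b by simp
    qed
    have "2 * i \<noteq> 2" "2*i \<noteq> -2" "-2*i \<noteq> 2" "-2*i \<noteq> -2" "2*i \<noteq> -2*i"
      using b two i0 a c1 by (auto simp: minus_equation_iff[of "2*i"])
    then show ?thesis unfolding T4_def using a by auto
  qed
  have cB: "card (Cb ` T4) = 4" using cT4 by (subst card_image) (auto simp: inj_on_def dest: CbinjE)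
  have cD: "card (D ` T4) = 4" using cT4 by (subst card_image) (auto simp: inj_on_def dest: DinjE)
  have dj1: "CS \<inter> Cb ` T4 = {}" unfolding CS_def using CCb by blast
  have dj2: "(CS \<union> Cb ` T4) \<inter> D ` T4 = {}" unfolding CS_def using CD CbD by blast
  have "card (CS \<union> Cb ` T4 \<union> D ` T4) = card (CS \<union> Cb ` T4) + card (D ` T4)"
    using dj2 by (intro card_Un_disjoint) auto
  also have "\<dots> = card CS + card (Cb ` T4) + card (D ` T4)"
    using dj1 by (subst card_Un_disjoint) auto
  finally have part2: "card (CS \<union> Cb ` T4 \<union> D ` T4) = 2 * CARD('a) + 8"
    using cCS cB cD by simp
  show ?thesis using part1 part2 P3 unfolding CS_def T4_def by blast
qed

thm_deps mainTheorem4

end
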